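(* For a pattern $\alpha$ let $H_\alpha(x)=\sum_{n\ge0}p_n(1213,\alpha)x^n$. Let $\rho=1(\tau+1)$ be a pattern of size at least two, where $\tau$ is a partition whose rightmost letter is greater than $1$. Then \[H_\rho(x)=1+\frac{x}{1-x}H_\tau(x)+\frac{x^2}{(1-x)(1-2x)}\bigl(H_\tau(x)-1\bigr).\] Consequently, if $p_n(1213,\tau)=p_n(1213,\tau')$ for all $n$ (with $\tau,\tau'$ both satisfying the hypothesis), then $p_n(1213,1(\tau+1))=p_n(1213,1(\tau'+1))$ for all $n$.
   Context: Set partitions of $[n]$ are written in canonical sequential form (restricted growth words). Pattern containment means having a subsequence order-isomorphic to the pattern; $p_n(T)$ is the number of partitions of $[n]$ avoiding every pattern in $T$. $\tau+1$ adds $1$ to every letter of $\tau$. *)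

theory Defs
  imports "HOL-Computational_Algebra.Formal_Power_Series" "HOL-Library.Sublist"
begin

text \<open>Restricted growth words (canonical sequential form of a set partition),
  letters are positive naturals starting with 1.\<close>
definition rgw :: "nat list \<Rightarrow> bool" where
  "rgw w \<longleftrightarrow> (\<forall>i<length w. 1 \<le> w ! i \<and>
       w ! i \<le> Suc (foldr max (take i w) 0))"

definition order_iso :: "nat list \<Rightarrow> nat list \<Rightarrow> bool" where
  "order_iso a b \<longleftrightarrow> length a = length b \<and>
     (\<forall>i<length a. \<forall>j<length a. (a ! i \<le> a ! j \<longleftrightarrow> b ! i \<le> b ! j))"

definition contains :: "nat list \<Rightarrow> nat list \<Rightarrow> bool" where
  "contains w p \<longleftrightarrow> (\<exists>u. subseq u w \<and> order_iso u p)"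

definition pn :: "nat \<Rightarrow> nat list set \<Rightarrow> nat" where
  "pn n T = card {w. rgw w \<and> length w = n \<and> (\<forall>t\<in>T. \<not> contains w t)}"

definition H :: "nat list \<Rightarrow> rat fps" where
  "H a = Abs_fps (\<lambda>n. of_nat (pn n {[1,2,1,3], a}))"

definition plus1 :: "nat list \<Rightarrow> nat list" where
  "plus1 t = map Suc t"

end

theory Submission imports Defs begin
declare foldr_append[simp del] foldr_replicate[simp del]

lemma foldr_max_app: "foldr max (xs @ ys) (0::nat) = max (foldr max xs 0) (foldr max ys 0)"
  by (induct xs) auto

lemma foldr_max_ge: "x \<in> set xs \<Longrightarrow> x \<le> foldr max xs (0::nat)"
  by (induct xs) auto

lemma foldr_max_le: "(\<forall>x\<in>set xs. x \<le> m) \<Longrightarrow> foldr max xs (0::nat) \<le> m"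
  by (induct xs) auto

lemma rgw_Nil[simp]: "rgw []" by (simp add: rgw_def)

lemma rgw_snoc: "rgw (w @ [x]) \<longleftrightarrow> rgw w \<and> 1 \<le> x \<and> x \<le> Suc (foldr max w 0)"
proof -
  have "rgw (w @ [x]) \<longleftrightarrow> (\<forall>i<length w. 1 \<le> w ! i \<and> w ! i \<le> Suc (foldr max (take i w) 0))
        \<and> 1 \<le> x \<and> x \<le> Suc (foldr max w 0)"
    unfolding rgw_def by (auto simp: nth_append less_Suc_eq)
  thus ?thesis by (simp add: rgw_def)
qed

lemma rgw_prefix: "rgw (u @ s) \<Longrightarrow> rgw u"
  unfolding rgw_def
proof (intro allI impI)
  fix i assume a: "\<forall>i<length (u @ s). 1 \<le> (u @ s) ! i \<and> (u @ s) ! i \<le> Suc (foldr max (take i (u @ s)) 0)"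
    and i: "i < length u"
  have "i < length (u @ s)" using i by simp
  with a have "1 \<le> (u @ s) ! i \<and> (u @ s) ! i \<le> Suc (foldr max (take i (u @ s)) 0)" by blast
  moreover have "take i (u @ s) = take i u" "(u @ s) ! i = u ! i" using i by (auto simp: nth_append)
  ultimately show "1 \<le> u ! i \<and> u ! i \<le> Suc (foldr max (take i u) 0)" by (simp del: take_append)
qed

lemma rgw_set_all: "rgw w \<Longrightarrow> \<forall>x\<in>set w. 1 \<le> x \<and> x \<le> length w"
proof (induct w rule: rev_induct)
  case Nil thus ?case by simp
next
  case (snoc y w)
  hence r: "rgw w" "1 \<le> y" "y \<le> Suc (foldr max w 0)" by (auto simp: rgw_snoc)
  with snoc have "\<forall>x\<in>set w. 1 \<le> x \<and> x \<le> length w" by auto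
  hence "foldr max w 0 \<le> length w" by (auto intro: foldr_max_le)
  with r snoc show ?case by (auto simp: rgw_snoc)
qed

lemma rgw_set: "rgw w \<Longrightarrow> x \<in> set w \<Longrightarrow> 1 \<le> x \<and> x \<le> length w"
  using rgw_set_all by blast

lemma rgw_hd: "rgw w \<Longrightarrow> w \<noteq> [] \<Longrightarrow> hd w = 1"
  unfolding rgw_def by (cases w) force+

lemma foldr_max_rep: "j \<ge> 1 \<Longrightarrow> foldr max (replicate j (Suc 0)) 0 = Suc 0"
proof (induct j)
  case (Suc j) thus ?case by (cases j) auto
qed simp

lemma foldr_max_mapSuc: "foldr max (map Suc v) 0 = (if v = [] then 0 else Suc (foldr max v 0))"
  by (induct v) auto

lemma rgw_rep: "rgw (replicate j (Suc 0))"
proof (induct j)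
  case (Suc j)
  have "replicate (Suc j) (Suc 0) = replicate j (Suc 0) @ [Suc 0]" by (simp add: replicate_append_same)
  with Suc show ?case by (simp add: rgw_snoc)
qed simp

lemma rgw_shift: "j \<ge> 1 \<Longrightarrow> \<forall>x\<in>set v. 1 \<le> x \<Longrightarrow> rgw (replicate j 1 @ map Suc v) \<longleftrightarrow> rgw v"
proof (induct v rule: rev_induct)
  case Nil thus ?case using rgw_rep by simp
next
  case (snoc x v)
  have m: "foldr max (replicate j 1 @ map Suc v) 0 = (if v = [] then 1 else Suc (foldr max v 0))"
    using snoc(2) by (auto simp: foldr_max_app foldr_max_rep foldr_max_mapSuc)
  have e: "replicate j 1 @ map Suc (v @ [x]) = (replicate j 1 @ map Suc v) @ [Suc x]" by simp
  show ?case unfolding e rgw_snoc using snoc m by auto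
qed

lemma rgw_ext: "rgw u \<Longrightarrow> u \<noteq> [] \<Longrightarrow> set s \<subseteq> {1,2} \<Longrightarrow> rgw (u @ s)"
proof (induct s rule: rev_induct)
  case (snoc x s)
  have "hd u \<in> set u" using snoc by simp
  hence "hd u \<le> foldr max u 0" by (rule foldr_max_ge)
  hence "1 \<le> foldr max (u @ s) 0" using rgw_hd[OF snoc(2,3)] by (simp add: foldr_max_app)
  with snoc show ?case by (auto simp: rgw_snoc simp del: append_assoc simp add: append_assoc[symmetric])
qed simp

lemma subseq_set: "subseq xs ys \<Longrightarrow> set xs \<subseteq> set ys"
  by (induct rule: list_emb.induct) auto

lemma subseq_map_inv: "subseq xs (map f ys) \<Longrightarrow> \<exists>zs. xs = map f zs \<and> subseq zs ys"
proof (induct ys arbitrary: xs)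
  case Nil thus ?case by (cases xs) auto
next
  case (Cons y ys)
  show ?case
  proof (cases xs)
    case Nil thus ?thesis by simp
  next
    case (Cons x xs')
    show ?thesis
    proof (cases "x = f y")
      case True
      with Cons.prems Cons have "subseq xs' (map f ys)" by simp
      then obtain zs where "xs' = map f zs" "subseq zs ys" using Cons.hyps by blast
      thus ?thesis using Cons True by (intro exI[of _ "y#zs"]) auto
    next
      case False
      with Cons.prems Cons have "subseq xs (map f ys)" by simp
      then obtain zs where "xs = map f zs" "subseq zs ys" using Cons.hyps by blast
      thus ?thesis by auto
    qed
  qed
qed

lemma order_iso_map_Suc: "order_iso (map Suc u) t \<longleftrightarrow> order_iso u t"
  by (simp add: order_iso_def)

lemma order_iso_map_Suc2: "order_iso u (map Suc t) \<longleftrightarrow> order_iso u t"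
  by (auto simp: order_iso_def)

lemma order_isoD: "order_iso u t \<Longrightarrow> i < length u \<Longrightarrow> k < length u \<Longrightarrow> (u!i \<le> u!k \<longleftrightarrow> t!i \<le> t!k)"
  by (simp add: order_iso_def)

lemma contains_lift: "contains v t \<Longrightarrow> contains (replicate j 1 @ map Suc v @ s) t"
proof -
  assume "contains v t"
  then obtain u where u: "subseq u v" "order_iso u t" by (auto simp: contains_def)
  have "subseq (map Suc u) (map Suc v)" using u(1) by (rule subseq_map)
  hence "subseq (map Suc u) (replicate j 1 @ map Suc v @ s)"
    by (intro subseq_drop_many subseq_rev_drop_many)
  thus ?thesis using u(2) by (auto simp: contains_def order_iso_map_Suc)
qed

lemma contains_rho_lift:
  assumes "j \<ge> 1" "rgw v" "rgw t" "contains v t"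
  shows "contains (replicate j 1 @ map Suc v @ s) (1 # plus1 t)"
proof -
  obtain u where u: "subseq u v" "order_iso u t" using assms(4) by (auto simp: contains_def)
  have u1: "\<forall>x\<in>set u. 1 \<le> x" using subseq_set[OF u(1)] rgw_set[OF assms(2)] by auto
  have t1: "\<forall>x\<in>set t. 1 \<le> x" using rgw_set[OF assms(3)] by auto
  have e: "replicate j 1 @ map Suc v @ s = 1 # (replicate (j - 1) 1 @ map Suc v @ s)"
    using assms(1) by (cases j) auto
  have "subseq (map Suc u) (map Suc v)" using u(1) by (rule subseq_map)
  hence "subseq (map Suc u) (replicate (j-1) 1 @ map Suc v @ s)"
    by (intro subseq_drop_many subseq_rev_drop_many)
  hence "subseq (1 # map Suc u) (replicate j 1 @ map Suc v @ s)" unfolding e by simp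
  moreover have "order_iso (1 # map Suc u) (1 # plus1 t)"
    unfolding order_iso_def plus1_def
  proof (intro conjI allI impI)
    show "length (1 # map Suc u) = length (1 # map Suc t)" using u(2) by (simp add: order_iso_def)
    fix i k assume ik: "i < length (1 # map Suc u)" "k < length (1 # map Suc u)"
    have lt: "length u = length t" using u(2) by (simp add: order_iso_def)
    show "((1 # map Suc u) ! i \<le> (1 # map Suc u) ! k) = ((1 # map Suc t) ! i \<le> (1 # map Suc t) ! k)"
    proof (cases i)
      case 0 thus ?thesis using ik lt by (cases k) auto
    next
      case (Suc i')
      hence i': "i' < length u" using ik by simp
      have a: "1 \<le> u!i'" "1 \<le> t!i'" using u1 t1 i' lt by auto
      show ?thesis
      proof (cases k)
        case 0 thus ?thesis using Suc a i' lt by auto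
      next
        case (Suc k')
        hence "k' < length u" using ik by simp
        thus ?thesis using \<open>i = Suc i'\<close> Suc order_isoD[OF u(2) i'] i' lt by simp
      qed
    qed
  qed
  ultimately show ?thesis by (auto simp: contains_def)
qed

lemma region_G':
  assumes "subseq u (R @ s)" "set s \<subseteq> {1,2}" "u \<noteq> []" "last u \<ge> (3::nat)"
  shows "subseq u R"
proof -
  obtain x1 x2 where x: "u = x1 @ x2" "subseq x1 R" "subseq x2 s" using assms(1) by (rule subseq_appendE)
  have "x2 = []"
  proof (rule ccontr)
    assume "x2 \<noteq> []"
    hence "last u = last x2" "last x2 \<in> set x2" using x(1) by auto
    hence "last u \<in> set s" using subseq_set[OF x(3)] by auto
    thus False using assms(2,4) by auto
  qed
  thus ?thesis using x by simp
qed

lemma region_G: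
  assumes "subseq u (replicate j 1 @ map Suc v @ s)" "set s \<subseteq> {1,2}" "u \<noteq> []" "last u \<ge> 3"
    "\<forall>x\<in>set u. 2 \<le> x"
  shows "\<exists>u'. u = map Suc u' \<and> subseq u' v"
proof -
  have "subseq u (replicate j 1 @ map Suc v)" using region_G'[of u "replicate j 1 @ map Suc v" s] assms by simp
  then obtain x1 x2 where x: "u = x1 @ x2" "subseq x1 (replicate j 1)" "subseq x2 (map Suc v)"
    by (rule subseq_appendE)
  have "set x1 \<subseteq> {1}" using subseq_set[OF x(2)] by auto
  hence "x1 = []" using assms(5) x(1) by (cases x1) auto
  thus ?thesis using x subseq_map_inv[OF x(3)] by simp
qed

lemma no_121:
  assumes "subseq [1,b,1,c] (replicate j 1 @ M)" "\<forall>x\<in>set M. (2::nat) \<le> x" "2 \<le> b"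
  shows False
proof -
  obtain x1 x2 where x: "[1,b,1,c] = x1 @ x2" "subseq x1 (replicate j 1)" "subseq x2 M"
    using assms(1) by (rule subseq_appendE)
  have s1: "set x1 \<subseteq> {1}" using subseq_set[OF x(2)] by auto
  have s2: "\<forall>x\<in>set x2. 2 \<le> x" using subseq_set[OF x(3)] assms(2) by auto
  show False using x(1) s1 s2 assms(3) by (auto simp: Cons_eq_append_conv)
qed

lemma W_ge1: "set s \<subseteq> {1,2} \<Longrightarrow> x \<in> set (replicate j 1 @ map Suc v @ s) \<Longrightarrow> 1 \<le> x"
  by auto

lemma contains_P_down:
  assumes "set s \<subseteq> {1,2}" "contains (replicate j 1 @ map Suc v @ s) [1,2,1,3]"
    and v1: "\<forall>x\<in>set v. 1 \<le> x"
  shows "contains v [1,2,1,3]"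
proof -
  obtain u where u: "subseq u (replicate j 1 @ map Suc v @ s)" "order_iso u [1,2,1,3]"
    using assms(2) by (auto simp: contains_def)
  have "length u = 4" using u(2) by (simp add: order_iso_def)
  then obtain a b a' c where ue: "u = [a,b,a',c]" by (auto simp: length_Suc_conv numeral_eq_Suc)
  have rel: "a' = a" "a < b" "b < c"
    using order_isoD[OF u(2), of 0 2] order_isoD[OF u(2), of 2 0] order_isoD[OF u(2), of 1 0]
      order_isoD[OF u(2), of 3 1] unfolding ue by auto
  have "a \<in> set u" using ue by simp
  hence a1: "1 \<le> a" using W_ge1[OF assms(1)] subseq_set[OF u(1)] by blast
  show ?thesis
  proof (cases "a = 1")
    case True
    have "subseq u (replicate j 1 @ map Suc v)"
      using region_G'[of u "replicate j 1 @ map Suc v" s] u(1) assms(1) rel ue True by simp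
    hence "subseq [1,b,1,c] (replicate j 1 @ map Suc v)" using ue rel True by simp
    from no_121[OF this] rel True v1 show ?thesis by auto
  next
    case False
    hence h: "\<forall>x\<in>set u. 2 \<le> x" "last u \<ge> 3" using a1 rel ue by auto
    have "u \<noteq> []" using ue by simp
    from region_G[OF u(1) assms(1) this h(2) h(1)]
    obtain u' where "u = map Suc u'" "subseq u' v" by blast
    thus ?thesis using u(2) by (auto simp: contains_def order_iso_map_Suc)
  qed
qed

lemma contains_rho_down:
  assumes "set s \<subseteq> {1,2}" "rgw t" "t \<noteq> []" "last t > 1"
    "contains (replicate j 1 @ map Suc v @ s) (1 # plus1 t)"
  shows "contains v t"
proof -
  obtain u where u: "subseq u (replicate j 1 @ map Suc v @ s)" "order_iso u (1 # map Suc t)"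
    using assms(5) by (auto simp: contains_def plus1_def)
  have "length u = Suc (length t)" using u(2) by (simp add: order_iso_def)
  then obtain a ut where ue: "u = a # ut" and lt: "length ut = length t" by (cases u) auto
  have iso: "order_iso ut t"
    unfolding order_iso_def
  proof (intro conjI allI impI)
    show "length ut = length t" by (rule lt)
    fix i k assume "i < length ut" "k < length ut"
    thus "(ut ! i \<le> ut ! k) = (t ! i \<le> t ! k)"
      using order_isoD[OF u(2), of "Suc i" "Suc k"] ue lt by simp
  qed
  have t1: "\<forall>x\<in>set t. 1 \<le> x" using rgw_set[OF assms(2)] by auto
  have "a \<in> set u" using ue by simp
  hence a1: "1 \<le> a" using W_ge1[OF assms(1)] subseq_set[OF u(1)] by blast
  have gt: "a < ut ! k" if "k < length ut" for k
  proof -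
    have "1 \<le> t ! k" using t1 that lt by auto
    thus ?thesis using order_isoD[OF u(2), of "Suc k" 0] ue that lt by auto
  qed
  have all2: "\<forall>x\<in>set ut. 2 \<le> x"
  proof
    fix x assume "x \<in> set ut"
    then obtain k where "k < length ut" "x = ut ! k" by (auto simp: in_set_conv_nth)
    thus "2 \<le> x" using gt a1 by fastforce
  qed
  have t0: "t ! 0 = 1" using rgw_hd[OF assms(2,3)] assms(3) by (simp add: hd_conv_nth)
  have lastt: "last t = t ! (length t - 1)" using assms(3) by (simp add: last_conv_nth)
  have ne: "ut \<noteq> []" using lt assms(3) by auto
  have "\<not> ut ! (length t - 1) \<le> ut ! 0"
    using order_isoD[OF iso, of "length t - 1" 0] lt assms(3,4) t0 lastt by auto
  moreover have "2 \<le> ut ! 0" using all2 ne by auto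
  ultimately have "last ut \<ge> 3" using ne lt by (simp add: last_conv_nth)
  then obtain u' where "ut = map Suc u'" "subseq u' v"
    using region_G[OF _ assms(1) ne _ all2] u(1) ue by (auto intro: subseq_Cons')
  thus ?thesis using iso by (auto simp: contains_def order_iso_map_Suc)
qed

definition Av :: "nat list \<Rightarrow> nat \<Rightarrow> nat list set" where
  "Av t n = {w. rgw w \<and> length w = n \<and> \<not> contains w [1,2,1,3] \<and> \<not> contains w t}"

definition ff :: "nat \<times> nat list \<times> nat list \<Rightarrow> nat list" where
  "ff x = (case x of (j,v,s) \<Rightarrow> replicate j 1 @ map Suc v @ s)"

definition dec :: "nat list \<Rightarrow> nat \<times> nat list \<times> nat list" where
  "dec w = (length (takeWhile (\<lambda>x. x = 1) w),
     map (\<lambda>x. x - 1) (takeWhile (\<lambda>x. x \<noteq> 1) (dropWhile (\<lambda>x. x = 1) w)),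
     dropWhile (\<lambda>x. x \<noteq> 1) (dropWhile (\<lambda>x. x = 1) w))"

definition Tp :: "nat list \<Rightarrow> nat \<Rightarrow> nat \<times> nat list \<times> nat list \<Rightarrow> bool" where
  "Tp t n x = (case x of (j,v,s) \<Rightarrow> j \<ge> 1 \<and> v \<in> Av t (length v) \<and> j + length v + length s = n \<and>
      (s = [] \<or> (v \<noteq> [] \<and> hd s = 1 \<and> set s \<subseteq> {1,2})))"

lemma dec_ff:
  assumes "\<forall>x\<in>set v. 1 \<le> x" "s = [] \<or> (v \<noteq> [] \<and> hd s = 1)"
  shows "dec (replicate j 1 @ map Suc v @ s) = (j,v,s)"
proof -
  have r1: "takeWhile (\<lambda>x. x = 1) (map Suc v @ s) = []" and
       r2: "dropWhile (\<lambda>x. x = 1) (map Suc v @ s) = map Suc v @ s"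
    using assms by (cases v; auto)+
  have r3: "takeWhile (\<lambda>x. x \<noteq> 1) s = []" "dropWhile (\<lambda>x. x \<noteq> 1) s = s"
    using assms by (cases s; auto)+
  have m: "\<forall>x\<in>set (map Suc v). x \<noteq> 1" using assms(1) by auto
  have a1: "takeWhile (\<lambda>x. x = 1) (replicate j 1 @ map Suc v @ s) = replicate j 1"
    using r1 by (subst takeWhile_append2) auto
  have a2: "dropWhile (\<lambda>x. x = 1) (replicate j 1 @ map Suc v @ s) = map Suc v @ s"
    using r2 by (subst dropWhile_append2) auto
  have a3: "takeWhile (\<lambda>x. x \<noteq> 1) (map Suc v @ s) = map Suc v"
    using r3 m by (subst takeWhile_append2) auto
  have a4: "dropWhile (\<lambda>x. x \<noteq> 1) (map Suc v @ s) = s"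
    using r3 m by (subst dropWhile_append2) auto
  show ?thesis unfolding dec_def a1 a2 a3 a4 by (simp add: comp_def)
qed

lemma P_iso: "c \<ge> 3 \<Longrightarrow> order_iso [1,2,1,c] [1,2,1,3]"
  by (simp add: order_iso_def All_less_Suc numeral_eq_Suc)

lemma ff_into:
  assumes "Tp t n (j,v,s)" "rgw t" "t \<noteq> []" "last t > 1"
  shows "ff (j,v,s) \<in> Av (1 # plus1 t) n"
proof -
  have j: "j \<ge> 1" and v: "rgw v" "\<not> contains v [1,2,1,3]" "\<not> contains v t"
    and len: "j + length v + length s = n" and sc: "s = [] \<or> (v \<noteq> [] \<and> hd s = 1 \<and> set s \<subseteq> {1,2})"
    using assms(1) by (auto simp: Tp_def Av_def)
  have s12: "set s \<subseteq> {1,2}" using sc by auto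
  have v1: "\<forall>x\<in>set v. 1 \<le> x" using rgw_set[OF v(1)] by auto
  have r0: "rgw (replicate j 1 @ map Suc v)" using rgw_shift[OF j v1] v(1) by simp
  have r: "rgw (replicate j 1 @ map Suc v @ s)"
  proof (cases "s = []")
    case True thus ?thesis using r0 by simp
  next
    case False
    have "replicate j 1 @ map Suc v \<noteq> []" using j by (cases j) auto
    from rgw_ext[OF r0 this s12] show ?thesis by simp
  qed
  have "\<not> contains (replicate j 1 @ map Suc v @ s) [1,2,1,3]"
    using contains_P_down[OF s12 _ v1] v(2) by blast
  moreover have "\<not> contains (replicate j 1 @ map Suc v @ s) (1 # plus1 t)"
    using contains_rho_down[OF s12 assms(2,3,4)] v(3) by blast
  ultimately show ?thesis using r len by (simp add: ff_def Av_def)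
qed

lemma ff_onto:
  assumes "w \<in> Av (1 # plus1 t) n" "n \<ge> 1" "rgw t"
  shows "Tp t n (dec w) \<and> ff (dec w) = w"
proof -
  have w: "rgw w" "length w = n" "\<not> contains w [1,2,1,3]" "\<not> contains w (1 # plus1 t)"
    using assms(1) by (auto simp: Av_def)
  define j where "j = length (takeWhile (\<lambda>x. x = 1) w)"
  define r where "r = dropWhile (\<lambda>x. x = 1) w"
  define m where "m = takeWhile (\<lambda>x. x \<noteq> 1) r"
  define s where "s = dropWhile (\<lambda>x. x \<noteq> 1) r"
  define v where "v = map (\<lambda>x. x - 1) m"
  have dw: "dec w = (j, v, s)" by (simp add: dec_def j_def r_def m_def s_def v_def)
  have tw: "takeWhile (\<lambda>x. x = 1) w = replicate j 1"
    unfolding j_def by (metis (mono_tags, lifting) set_takeWhileD replicate_length_same)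
  have wd: "w = replicate j 1 @ m @ s" using tw
    by (metis r_def m_def s_def takeWhile_dropWhile_id)
  have wne: "w \<noteq> []" using w(2) assms(2) by auto
  have j1: "j \<ge> 1" using rgw_hd[OF w(1) wne] wne unfolding j_def by (cases w) auto
  have wge: "\<forall>x\<in>set w. 1 \<le> x" using rgw_set[OF w(1)] by auto
  have m2: "\<forall>x\<in>set m. 2 \<le> x"
  proof
    fix x assume "x \<in> set m"
    hence "x \<noteq> 1" "x \<in> set w" using wd unfolding m_def by (auto dest: set_takeWhileD)
    thus "2 \<le> x" using wge by fastforce
  qed
  have mv: "m = map Suc v" unfolding v_def using m2 by (induct m) auto
  have v1: "\<forall>x\<in>set v. 1 \<le> x" using m2 mv by auto
  have wd2: "w = replicate j 1 @ map Suc v @ s" using wd mv by simp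
  have rv: "rgw v" using rgw_prefix[of "replicate j 1 @ map Suc v" s] w(1) wd2 rgw_shift[OF j1 v1] by simp
  have vP: "\<not> contains v [1,2,1,3]" using contains_lift[of v _ j s] w(3) wd2 by auto
  have vt: "\<not> contains v t" using contains_rho_lift[OF j1 rv assms(3), of s] w(4) wd2 by auto
  have sc: "s = [] \<or> (v \<noteq> [] \<and> hd s = 1 \<and> set s \<subseteq> {1,2})"
  proof (cases "s = []")
    case False
    have hs: "hd s = 1" using False hd_dropWhile[of "\<lambda>x. x \<noteq> 1" r] unfolding s_def by simp
    have rne: "r \<noteq> []" using False unfolding s_def by auto
    have "hd r \<noteq> 1" using rne hd_dropWhile[of "\<lambda>x. x = 1" w] unfolding r_def by simp
    hence mne: "m \<noteq> []" using rne unfolding m_def by (simp add: takeWhile_eq_Nil_iff)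
    hence vne: "v \<noteq> []" using mv by auto
    have hm: "hd m = 2"
    proof -
      have "w ! j = hd m" using wd mne by (simp add: nth_append hd_conv_nth)
      moreover have "take j w = replicate j 1" using wd by simp
      moreover have "j < length w" using wd mne by simp
      ultimately have "hd m \<le> Suc (foldr max (replicate j 1) 0)"
        using w(1) unfolding rgw_def by metis
      hence "hd m \<le> 2" using foldr_max_rep[OF j1] by simp
      moreover have "2 \<le> hd m" using m2 mne by simp
      ultimately show ?thesis by simp
    qed
    have "set s \<subseteq> {1,2}"
    proof
      fix c assume cs: "c \<in> set s"
      show "c \<in> {1,2}"
      proof (rule ccontr)
        assume nc: "c \<notin> {1,2}"
        have "1 \<le> c" using wge wd cs by auto
        hence c3: "c \<ge> 3" using nc by auto
        obtain y where sy: "s = 1 # y" using False hs by (cases s) auto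
        have cy: "c \<in> set y" using cs sy nc by auto
        have "subseq [1] (replicate j 1)" using j1 by (cases j) auto
        moreover have "subseq [2] m" using mne hm by (cases m) auto
        moreover have "subseq [1,c] s" using sy cy by (simp add: subseq_singleton_left)
        ultimately have "subseq ([1] @ [2] @ [1,c]) (replicate j 1 @ m @ s)"
          by (intro list_emb_append_mono)
        hence "subseq [1,2,1,c] w" using wd by simp
        thus False using w(3) P_iso[OF c3] by (auto simp: contains_def)
      qed
    qed
    thus ?thesis using vne hs by simp
  qed simp
  have "length w = j + length v + length s" using wd2 by simp
  hence "Tp t n (j,v,s)" using j1 rv vP vt sc w(2) by (simp add: Tp_def Av_def)
  thus ?thesis using dw wd2 by (simp add: ff_def)
qed

lemma Av_finite: "finite (Av t k)"
proof (rule finite_subset)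
  show "Av t k \<subseteq> {w. set w \<subseteq> {0..k} \<and> length w = k}"
    using rgw_set by (fastforce simp: Av_def)
  show "finite {w. set w \<subseteq> {0..k} \<and> length w = k}" by (rule finite_lists_length_eq) simp
qed

lemma card_Av_rho:
  assumes "rgw t" "t \<noteq> []" "last t > 1" "n \<ge> 1"
  shows "card (Av (1 # plus1 t) n) = card {x. Tp t n x}"
proof -
  have "bij_betw ff {x. Tp t n x} (Av (1 # plus1 t) n)"
  proof (rule bij_betw_byWitness[where f' = dec])
    show "\<forall>a\<in>{x. Tp t n x}. dec (ff a) = a"
    proof
      fix a assume "a \<in> {x. Tp t n x}"
      then obtain j v s where a: "a = (j,v,s)" "Tp t n (j,v,s)" by (cases a) auto
      hence "\<forall>x\<in>set v. 1 \<le> x" "s = [] \<or> (v \<noteq> [] \<and> hd s = 1)"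
        using rgw_set by (auto simp: Tp_def Av_def)
      thus "dec (ff a) = a" using dec_ff a by (simp add: ff_def)
    qed
    show "\<forall>a'\<in>Av (1 # plus1 t) n. ff (dec a') = a'" using ff_onto assms by blast
    show "ff ` {x. Tp t n x} \<subseteq> Av (1 # plus1 t) n" using ff_into assms by force
    show "dec ` Av (1 # plus1 t) n \<subseteq> {x. Tp t n x}" using ff_onto assms by blast
  qed
  thus ?thesis by (simp add: bij_betw_same_card)
qed

definition CC :: "nat \<Rightarrow> (nat \<times> nat list) set" where
  "CC i = {(j,y). j \<ge> 1 \<and> set y \<subseteq> {1,2} \<and> j + 1 + length y = i}"

lemma geo0: "Suc (\<Sum>j\<in>{1..<Suc m}. (2::nat)^(m-j)) = 2^m"
proof (induct m)
  case 0 thus ?case by simp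
next
  case (Suc m)
  have "(\<Sum>j\<in>{1..<Suc (Suc m)}. (2::nat)^(Suc m-j)) = 2^(Suc m - Suc m) + (\<Sum>j\<in>{1..<Suc m}. 2^(Suc m-j))"
    by (simp add: add.commute)
  also have "(\<Sum>j\<in>{1..<Suc m}. (2::nat)^(Suc m-j)) = (\<Sum>j\<in>{1..<Suc m}. 2 * 2^(m-j))"
    by (rule sum.cong) (auto simp: Suc_diff_le)
  also have "\<dots> = 2 * (\<Sum>j\<in>{1..<Suc m}. 2^(m-j))" by (simp add: sum_distrib_left)
  finally have "(\<Sum>j\<in>{1..<Suc (Suc m)}. (2::nat)^(Suc m-j)) = 1 + 2 * (\<Sum>j\<in>{1..<Suc m}. 2^(m-j))" by simp
  thus ?case using Suc by simp
qed

lemma geo: "(\<Sum>j\<in>{1..<Suc m}. (2::nat)^(m-j)) = 2^m - 1"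
  using geo0[of m] by simp

lemma CC_eq: "CC i = Sigma {1..<i} (\<lambda>j. {y. set y \<subseteq> {1,2} \<and> length y = i - 1 - j})"
  unfolding CC_def by auto

lemma CC_finite: "finite (CC i)"
  unfolding CC_eq by (intro finite_SigmaI finite_atLeastLessThan finite_lists_length_eq) auto

lemma card_CC: "i \<ge> 1 \<Longrightarrow> card (CC i) = 2^(i-1) - 1"
proof -
  assume "i \<ge> 1"
  then obtain m where i: "i = Suc m" by (cases i) auto
  have "card (CC i) = (\<Sum>j\<in>{1..<i}. card {y. set y \<subseteq> {1::nat,2} \<and> length y = i - 1 - j})"
    unfolding CC_eq by (rule card_SigmaI) (auto intro: finite_lists_length_eq)
  also have "\<dots> = (\<Sum>j\<in>{1..<i}. 2 ^ (i - 1 - j))" by (simp add: card_lists_length_eq eval_nat_numeral)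
  also have "\<dots> = 2^(i-1) - 1" using geo[of m] i by simp
  finally show ?thesis .
qed

lemma Av_len: "v \<in> Av t k \<Longrightarrow> length v = k" by (simp add: Av_def)

lemma Tp_split: "{x. Tp t n x} = (\<lambda>(i,v). (i,v,[])) ` Sigma {1..n} (\<lambda>i. Av t (n-i))
   \<union> (\<lambda>(i,v,j,y). (j,v,1#y)) ` Sigma {1..<n} (\<lambda>i. Av t (n-i) \<times> CC i)"
  (is "?L = ?A \<union> ?B")
proof
  show "?L \<subseteq> ?A \<union> ?B"
  proof
    fix x assume "x \<in> ?L"
    then obtain j v s where x: "x = (j,v,s)" "Tp t n (j,v,s)" by (cases x) auto
    hence h: "j \<ge> 1" "v \<in> Av t (length v)" "j + length v + length s = n"
      "s = [] \<or> (v \<noteq> [] \<and> hd s = 1 \<and> set s \<subseteq> {1,2})" by (auto simp: Tp_def)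
    show "x \<in> ?A \<union> ?B"
    proof (cases "s = []")
      case True
      have "(j,v) \<in> Sigma {1..n} (\<lambda>i. Av t (n-i))" using h True by auto
      hence "(j,v,[]) \<in> ?A" by (rule rev_image_eqI) simp
      thus ?thesis using x True by simp
    next
      case False
      then obtain y where sy: "s = 1 # y" using h(4) by (cases s) auto
      have vne: "v \<noteq> []" "set y \<subseteq> {1,2}" using h(4) False sy by auto
      define i where "i = j + 1 + length y"
      have "(i,v,j,y) \<in> Sigma {1..<n} (\<lambda>i. Av t (n-i) \<times> CC i)"
        using h vne sy unfolding i_def CC_def by auto
      hence "(j,v,1#y) \<in> ?B" by (rule rev_image_eqI) simp
      thus ?thesis using x sy by simp
    qed
  qed
  show "?A \<union> ?B \<subseteq> ?L"
  proof
    fix x assume "x \<in> ?A \<union> ?B"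
    thus "x \<in> ?L"
    proof
      assume "x \<in> ?A"
      then obtain i v where "x = (i,v,[])" "i \<in> {1..n}" "v \<in> Av t (n-i)" by auto
      thus ?thesis using Av_len[of v t "n-i"] by (auto simp: Tp_def)
    next
      assume "x \<in> ?B"
      then obtain i v j y where "x = (j,v,1#y)" "i \<in> {1..<n}" "v \<in> Av t (n-i)" "(j,y) \<in> CC i" by auto
      thus ?thesis using Av_len[of v t "n-i"] by (auto simp: Tp_def CC_def)
    qed
  qed
qed

lemma card_Tp: "card {x. Tp t n x} = (\<Sum>i\<in>{1..n}. card (Av t (n-i)))
   + (\<Sum>i\<in>{1..<n}. card (Av t (n-i)) * (2^(i-1) - 1))"
proof -
  let ?S1 = "Sigma {1..n} (\<lambda>i. Av t (n-i))" and ?S2 = "Sigma {1..<n} (\<lambda>i. Av t (n-i) \<times> CC i)"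
  let ?g1 = "(\<lambda>(i,v). (i,v,[])) :: nat \<times> nat list \<Rightarrow> nat \<times> nat list \<times> nat list"
  let ?g2 = "(\<lambda>(i,v,j,y). (j,v,1#y)) :: nat \<times> nat list \<times> nat \<times> nat list \<Rightarrow> nat \<times> nat list \<times> nat list"
  have f1: "finite ?S1" by (intro finite_SigmaI) (auto simp: Av_finite)
  have f2: "finite ?S2" by (intro finite_SigmaI finite_cartesian_product) (auto simp: Av_finite CC_finite)
  have i1: "inj_on ?g1 ?S1" by (auto simp: inj_on_def)
  have i2: "inj_on ?g2 ?S2" by (auto simp: inj_on_def CC_def)
  have d: "?g1 ` ?S1 \<inter> ?g2 ` ?S2 = {}" by auto
  have "card {x. Tp t n x} = card (?g1 ` ?S1) + card (?g2 ` ?S2)"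
    unfolding Tp_split by (rule card_Un_disjoint) (use f1 f2 d in auto)
  also have "\<dots> = card ?S1 + card ?S2" using card_image[OF i1] card_image[OF i2] by simp
  also have "card ?S1 = (\<Sum>i\<in>{1..n}. card (Av t (n-i)))" by (rule card_SigmaI) (auto simp: Av_finite)
  also have "card ?S2 = (\<Sum>i\<in>{1..<n}. card (Av t (n-i) \<times> CC i))"
    by (rule card_SigmaI) (auto simp: Av_finite CC_finite)
  also have "\<dots> = (\<Sum>i\<in>{1..<n}. card (Av t (n-i)) * (2^(i-1) - 1))"
    by (rule sum.cong) (auto simp: card_cartesian_product card_CC)
  finally show ?thesis .
qed

lemma contains_Nil: "t \<noteq> [] \<Longrightarrow> \<not> contains [] t"
  by (auto simp: contains_def order_iso_def)

lemma Av_0: "t \<noteq> [] \<Longrightarrow> Av t 0 = {[]}"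
  by (auto simp: Av_def contains_Nil)

lemma pn_Av: "pn n {[1,2,1,3], a} = card (Av a n)"
  unfolding pn_def Av_def by (rule arg_cong[where f = card]) auto

definition EE :: "rat fps" where "EE = Abs_fps (\<lambda>i. if i = 0 then 0 else 1)"
definition GG :: "rat fps" where "GG = Abs_fps (\<lambda>i. if i = 0 then 0 else 2^(i-1) - 1)"

lemma EE_eq: "fps_X / (1 - fps_X) = EE"
proof -
  have "EE * (1 - fps_X) = fps_X"
  proof (rule fps_ext)
    fix n
    have "EE * (1 - fps_X) = EE - fps_X * EE" by (simp add: algebra_simps)
    thus "fps_nth (EE * (1 - fps_X)) n = fps_nth fps_X n"
      by (cases n) (auto simp: EE_def)
  qed
  hence "fps_X / (1 - fps_X) = EE * (1 - fps_X) * inverse (1 - fps_X)"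
    by (simp add: fps_divide_unit)
  also have "\<dots> = EE" by (simp add: mult.assoc inverse_mult_eq_1')
  finally show ?thesis .
qed

lemma GG_eq: "fps_X ^ 2 / ((1 - fps_X) * (1 - 2 * fps_X)) = GG"
proof -
  have "GG * ((1 - fps_X) * (1 - 2 * fps_X)) = fps_X ^ 2"
  proof (rule fps_ext)
    fix n
    have "GG * ((1 - fps_X) * (1 - 2 * fps_X)) = GG - 3 * (fps_X * GG) + 2 * (fps_X * (fps_X * GG))"
      by (simp add: algebra_simps power2_eq_square)
    moreover have "fps_nth (GG - 3 * (fps_X * GG) + 2 * (fps_X * (fps_X * GG))) n = fps_nth (fps_X ^ 2 :: rat fps) n"
    proof -
      consider "n = 0" | "n = 1" | "n = 2" | k where "n = Suc (Suc (Suc k))"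
        by (metis One_nat_def Suc_1 not0_implies_Suc)
      thus ?thesis
      proof cases
        case 4 thus ?thesis by (simp add: GG_def numeral_fps_const algebra_simps)
      qed (auto simp: GG_def numeral_fps_const)
    qed
    ultimately show "fps_nth (GG * ((1 - fps_X) * (1 - 2 * fps_X))) n = fps_nth (fps_X ^ 2 :: rat fps) n" by simp
  qed
  moreover have "fps_nth ((1 - fps_X) * (1 - 2 * fps_X) :: rat fps) 0 \<noteq> 0" by simp
  ultimately have "fps_X ^ 2 / ((1 - fps_X) * (1 - 2 * fps_X)) = GG * ((1 - fps_X) * (1 - 2 * fps_X)) * inverse ((1 - fps_X) * (1 - 2 * fps_X))"
    by (simp add: fps_divide_unit)
  also have "\<dots> = GG"
  proof -
    have h: "((1 - fps_X) * (1 - 2 * fps_X)) * inverse ((1 - fps_X) * (1 - 2 * fps_X) :: rat fps) = 1"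
      using \<open>fps_nth ((1 - fps_X) * (1 - 2 * fps_X) :: rat fps) 0 \<noteq> 0\<close> by (rule inverse_mult_eq_1')
    show ?thesis unfolding mult.assoc[of GG "(1 - fps_X) * (1 - 2 * fps_X)"] h by simp
  qed
  finally show ?thesis .
qed

lemma main_H:
  assumes "rgw t" "t \<noteq> []" "last t > 1"
  shows "H (1 # plus1 t) = 1 + fps_X / (1 - fps_X) * H t
              + fps_X ^ 2 / ((1 - fps_X) * (1 - 2 * fps_X)) * (H t - 1)"
  unfolding EE_eq GG_eq
proof (rule fps_ext)
  fix n
  let ?h = "\<lambda>k. (of_nat (card (Av t k)) :: rat)"
  have Hn: "fps_nth (H a) k = of_nat (card (Av a k))" for a k unfolding H_def fps_nth_Abs_fps pn_Av by (rule refl)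
  have h0: "?h 0 = 1" using Av_0[OF assms(2)] by simp
  show "fps_nth (H (1 # plus1 t)) n = fps_nth (1 + EE * H t + GG * (H t - 1)) n"
  proof (cases "n = 0")
    case True
    have "Av (1 # plus1 t) 0 = {[]}" by (rule Av_0) simp
    thus ?thesis using True by (simp add: Hn fps_mult_nth EE_def GG_def)
  next
    case False
    hence n1: "n \<ge> 1" by simp
    have s1: "fps_nth (EE * H t) n = (\<Sum>i\<in>{1..n}. ?h (n-i))"
      unfolding fps_mult_nth
      by (rule sum.mono_neutral_cong_right) (auto simp: EE_def Hn)
    have s2: "fps_nth (GG * (H t - 1)) n = (\<Sum>i\<in>{1..<n}. (2^(i-1) - 1) * ?h (n-i))"
    proof (unfold fps_mult_nth, rule sum.mono_neutral_cong_right)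
      show "finite {0..n}" by simp
      show "{1..<n} \<subseteq> {0..n}" by auto
      show "\<forall>i\<in>{0..n} - {1..<n}. fps_nth GG i * fps_nth (H t - 1) (n - i) = 0"
      proof
        fix i assume "i \<in> {0..n} - {1..<n}"
        hence "i = 0 \<or> i = n" by auto
        thus "fps_nth GG i * fps_nth (H t - 1) (n - i) = 0"
          using h0 by (auto simp: GG_def Hn)
      qed
      show "\<And>i. i \<in> {1..<n} \<Longrightarrow> fps_nth GG i * fps_nth (H t - 1) (n - i) = (2^(i-1) - 1) * ?h (n-i)"
        by (auto simp: GG_def Hn)
    qed
    have c: "card (Av (1 # plus1 t) n) = (\<Sum>i\<in>{1..n}. card (Av t (n-i)))
       + (\<Sum>i\<in>{1..<n}. card (Av t (n-i)) * (2^(i-1) - 1))"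
      using card_Av_rho[OF assms n1] card_Tp by simp
    have "(of_nat (card (Av (1 # plus1 t) n)) :: rat) = (\<Sum>i\<in>{1..n}. ?h (n-i))
       + (\<Sum>i\<in>{1..<n}. (2^(i-1) - 1) * ?h (n-i))"
      unfolding c of_nat_add of_nat_sum of_nat_mult
      by (simp add: of_nat_diff one_le_power mult.commute)
    thus ?thesis using False by (simp add: Hn s1 s2)
  qed
qed

theorem theorem4p9:
  shows "(\<forall>\<tau>. rgw \<tau> \<and> \<tau> \<noteq> [] \<and> last \<tau> > 1 \<and> length (1 # plus1 \<tau>) \<ge> 2 \<longrightarrow>
           H (1 # plus1 \<tau>) = 1 + fps_X / (1 - fps_X) * H \<tau>
              + fps_X ^ 2 / ((1 - fps_X) * (1 - 2 * fps_X)) * (H \<tau> - 1))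
       \<and> (\<forall>\<tau> \<tau>'. rgw \<tau> \<and> \<tau> \<noteq> [] \<and> last \<tau> > 1 \<and>
                 rgw \<tau>' \<and> \<tau>' \<noteq> [] \<and> last \<tau>' > 1 \<and>
                 (\<forall>n. pn n {[1,2,1,3], \<tau>} = pn n {[1,2,1,3], \<tau>'}) \<longrightarrow>
                 (\<forall>n. pn n {[1,2,1,3], 1 # plus1 \<tau>} = pn n {[1,2,1,3], 1 # plus1 \<tau>'}))"
proof (intro conjI allI impI)
  fix \<tau> assume "rgw \<tau> \<and> \<tau> \<noteq> [] \<and> last \<tau> > 1 \<and> length (1 # plus1 \<tau>) \<ge> 2"
  thus "H (1 # plus1 \<tau>) = 1 + fps_X / (1 - fps_X) * H \<tau>
              + fps_X ^ 2 / ((1 - fps_X) * (1 - 2 * fps_X)) * (H \<tau> - 1)"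
    using main_H by blast
next
  fix \<tau> \<tau>' n
  assume a: "rgw \<tau> \<and> \<tau> \<noteq> [] \<and> last \<tau> > 1 \<and>
                 rgw \<tau>' \<and> \<tau>' \<noteq> [] \<and> last \<tau>' > 1 \<and>
                 (\<forall>n. pn n {[1,2,1,3], \<tau>} = pn n {[1,2,1,3], \<tau>'})"
  have "H \<tau> = H \<tau>'" using a by (simp add: H_def)
  hence "H (1 # plus1 \<tau>) = H (1 # plus1 \<tau>')" using a main_H by metis
  hence "fps_nth (H (1 # plus1 \<tau>)) n = fps_nth (H (1 # plus1 \<tau>')) n" by simp
  thus "pn n {[1,2,1,3], 1 # plus1 \<tau>} = pn n {[1,2,1,3], 1 # plus1 \<tau>'}" by (simp add: H_def)
qed

end
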